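(* Let $d\ge1$, $\sigma>0$, and let $A_0,A_1\in\mathbb{R}^{d\times d}$ be constant matrices. Let $G:[0,\infty)\to\mathbb{R}^{d\times d}$ be continuous with $A_1G(\vartheta)=G(\vartheta)A_1$ for all $\vartheta\ge0$, and let $G^*(\vartheta)=G(0)$ for $\vartheta\in[-\sigma,0)$, $G^*(\vartheta)=G(\vartheta)$ for $\vartheta\ge0$. Let $Z$ be the function defined in the context. Then \[ X(\vartheta)=\int_0^{\vartheta}Z(\vartheta-\sigma-s)\,G^*(s)\,ds,\qquad\vartheta\in[-\sigma,\infty), \] satisfies \[ \dot X(\vartheta)=A_0X(\vartheta-\sigma)+X(\vartheta-\sigma)A_1+G(\vartheta),\ \ \vartheta\ge0,\qquad X(\vartheta)=\Theta,\ \ \vartheta\in[-\sigma,0]. \]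
   Context: $\Theta$ and $I$ denote the $d\times d$ zero and identity matrices. Define matrices $Q_{r+1}(r\sigma)$, $r=0,1,2,\dots$, recursively by $Q_1(0)=I$ and $Q_{r+1}(r\sigma)=A_0Q_r((r-1)\sigma)+Q_r((r-1)\sigma)A_1$ for $r\ge 1$. Define $Z:\mathbb{R}\to\mathbb{R}^{d\times d}$ by $Z(\vartheta)=\Theta$ for $\vartheta<-\sigma$, and, for each integer $u\ge 0$ and $\vartheta\in[(u-1)\sigma,u\sigma)$, \[ Z(\vartheta)=\sum_{r=0}^{u}Q_{r+1}(r\sigma)\frac{(\vartheta-(r-1)\sigma)^r}{r!}. \] *)

theory Defs
  imports "HOL-Analysis.Analysis"
begin

text \<open>Matrices in R^{d x d} are represented as real^'n^'n for a finite index type 'n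
  (d = CARD('n) >= 1).  Qmat A0 A1 r is the matrix Q_{r+1}(r sigma) of the paper.\<close>

fun Qmat :: "real^'n^'n \<Rightarrow> real^'n^'n \<Rightarrow> nat \<Rightarrow> real^'n^'n" where
  "Qmat A0 A1 0 = mat 1"
| "Qmat A0 A1 (Suc r) = A0 ** Qmat A0 A1 r + Qmat A0 A1 r ** A1"

definition Zfun :: "real^'n^'n \<Rightarrow> real^'n^'n \<Rightarrow> real \<Rightarrow> real \<Rightarrow> real^'n^'n" where
  "Zfun A0 A1 \<sigma> t =
     (if t < - \<sigma> then 0
      else (\<Sum>r = 0..nat (\<lfloor>t / \<sigma>\<rfloor> + 1).
              ((t - (real r - 1) * \<sigma>) ^ r / fact r) *\<^sub>R Qmat A0 A1 r))"

definition Gstar :: "real \<Rightarrow> (real \<Rightarrow> real^'n^'n) \<Rightarrow> real \<Rightarrow> real^'n^'n" where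
  "Gstar \<sigma> G t = (if t < 0 then G 0 else G t)"

text \<open>Oriented integral: int_0^t f = - int_t^0 f for t < 0.\<close>

definition Xsol :: "real^'n^'n \<Rightarrow> real^'n^'n \<Rightarrow> real \<Rightarrow> (real \<Rightarrow> real^'n^'n) \<Rightarrow> real \<Rightarrow> real^'n^'n" where
  "Xsol A0 A1 \<sigma> G t =
     (if 0 \<le> t then integral {0..t} (\<lambda>s. Zfun A0 A1 \<sigma> (t - \<sigma> - s) ** Gstar \<sigma> G s)
      else - integral {t..0} (\<lambda>s. Zfun A0 A1 \<sigma> (t - \<sigma> - s) ** Gstar \<sigma> G s))"

end

theory Submission
  imports Defs
begin


lemma mm_scaleR_right: "(A::real^'n^'n) ** (c *\<^sub>R B) = c *\<^sub>R (A ** B)"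
  by (simp add: matrix_matrix_mult_def vec_eq_iff sum_distrib_left algebra_simps)
lemma mm_scaleR_left: "(c *\<^sub>R A::real^'n^'n) ** B = c *\<^sub>R (A ** B)"
  by (simp add: matrix_matrix_mult_def vec_eq_iff sum_distrib_left algebra_simps)
lemma mm_diff_right: "(A::real^'n^'n) ** (B - C) = A ** B - A ** C"
  by (simp add: matrix_matrix_mult_def vec_eq_iff sum_subtractf algebra_simps)
lemma mm_add_left: "((B::real^'n^'n) + C) ** A = B ** A + C ** A"
  by (vector matrix_matrix_mult_def sum.distrib[symmetric] field_simps)
lemma bl_mm_left: fixes A :: "real^'n^'n" shows "bounded_linear (\<lambda>M::real^'n^'n. A ** M)"
  unfolding linear_conv_bounded_linear[symmetric]
  by (rule linearI) (rule matrix_add_ldistrib, rule mm_scaleR_right)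
lemma bl_mm_right: fixes A :: "real^'n^'n" shows "bounded_linear (\<lambda>M::real^'n^'n. M ** A)"
  unfolding linear_conv_bounded_linear[symmetric]
  by (rule linearI) (rule mm_add_left, rule mm_scaleR_left)

definition Pp :: "nat \<Rightarrow> real \<Rightarrow> real" where
  "Pp r y = (if 0 \<le> y then y ^ r / fact r else 0)"

lemma Pp_max: "r \<ge> 1 \<Longrightarrow> Pp r y = (max y 0) ^ r / fact r"
  by (auto simp: Pp_def max_def)

lemma Pp_cont: "r \<ge> 1 \<Longrightarrow> continuous_on UNIV (Pp r)"
proof -
  assume "r \<ge> 1"
  then have "Pp r = (\<lambda>y. (max y 0) ^ r / fact r)" using Pp_max by auto
  then show ?thesis by (simp add: continuous_intros)
qed

lemma Pp_deriv: assumes "r \<ge> 1" shows "(Pp (Suc r) has_vector_derivative Pp r y) (at y)"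
proof -
  have eq: "Pp (Suc r) = (\<lambda>y. if y \<in> {0..} then y ^ Suc r / fact (Suc r) else 0)"
    by (auto simp: Pp_def fun_eq_iff)
  have cl: "closure {0::real..} \<inter> closure {..<0} = {0}" by auto
  have "((\<lambda>y. if y \<in> {0..} then y ^ Suc r / fact (Suc r) else 0) has_vector_derivative
     (if y \<in> {0..} then y ^ r / fact r else 0)) (at y within UNIV)"
  proof (rule has_vector_derivative_If_within_closures[where T = "{..<0}"])
    show "y \<in> {0..} \<union> {..<0}" by auto
    show "UNIV = {0::real..} \<union> {..<0}" by auto
    show "((\<lambda>y. y ^ Suc r / fact (Suc r)) has_vector_derivative y ^ r / fact r)
         (at y within {0..} \<union> (closure {0..} \<inter> closure {..<0}))"
    proof -
      have "((\<lambda>y. y ^ Suc r / fact (Suc r)) has_real_derivative (real (Suc r) * y^r / fact (Suc r)))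
         (at y within {0..} \<union> (closure {0..} \<inter> closure {..<0}))"
        using DERIV_cdivide[OF DERIV_pow[of "Suc r" y], of "fact (Suc r)"] by simp
      moreover have "real (Suc r) * y^r / fact (Suc r) = y ^ r / fact r"
        by (simp add: fact_Suc del: of_nat_Suc)
      ultimately show ?thesis unfolding has_real_derivative_iff_has_vector_derivative by simp
    qed
    show "((\<lambda>y. 0) has_vector_derivative 0) (at y within {..<0} \<union> (closure {0..} \<inter> closure {..<0}))"
      by (rule has_vector_derivative_const)
    show "y ^ Suc r / fact (Suc r) = 0" if "y \<in> closure {0..}" "y \<in> closure {..<0}" for y :: real
    proof - have "y = 0" using that by (auto simp: closure_closed) then show ?thesis by simp qed
    show "y ^ r / fact r = 0" if "y \<in> closure {0..}" "y \<in> closure {..<0}" for y :: real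
    proof - have "y = 0" using that by (auto simp: closure_closed) then show ?thesis using assms by simp qed
  qed
  then show ?thesis unfolding eq by (simp add: Pp_def)
qed



definition Ff :: "(real \<Rightarrow> real^'n^'n) \<Rightarrow> nat \<Rightarrow> real \<Rightarrow> real^'n^'n" where
  "Ff G r x = (if 0 \<le> x then integral {0..x} (\<lambda>s. ((x - s) ^ r / fact r) *\<^sub>R G s) else 0)"

lemma FTC_atLeast:
  fixes f :: "real \<Rightarrow> real^'n^'n"
  assumes "continuous_on {a..} f" "a \<le> x"
  shows "((\<lambda>u. integral {a..u} f) has_vector_derivative f x) (at x within {a..})"
proof -
  have "continuous_on {a..x+1} f" using assms(1) by (rule continuous_on_subset) auto
  then have d: "((\<lambda>u. integral {a..u} f) has_vector_derivative f x) (at x within {a..x+1})"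
    using assms(2) by (intro integral_has_vector_derivative) auto
  have "at x within {a..x+1} = at x within {a..}"
    by (rule at_within_nhd[where S="{..<x+1}"]) auto
  then show ?thesis using d by simp
qed

lemma cont_PG:
  fixes G :: "real \<Rightarrow> real^'n^'n"
  assumes G: "continuous_on {0..} G" and r: "r \<ge> 1" and S: "S \<subseteq> {0..}"
  shows "continuous_on S (\<lambda>s. Pp r (c - s) *\<^sub>R G s)"
proof -
  have "continuous_on S (\<lambda>s. Pp r (c - s))"
    using Pp_cont[OF r] by (intro continuous_on_compose2[OF Pp_cont[OF r]] continuous_intros) auto
  moreover have "continuous_on S G" using G S by (rule continuous_on_subset)
  ultimately show ?thesis by (intro continuous_intros)
qed

lemma Ff_eq_big:
  fixes G :: "real \<Rightarrow> real^'n^'n"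
  assumes G: "continuous_on {0..} G" and r: "r \<ge> 1" and xb: "x \<le> b" and b: "0 \<le> b"
  shows "Ff G r x = integral {0..b} (\<lambda>s. Pp r (x - s) *\<^sub>R G s)"
proof (cases "0 \<le> x")
  case False
  then have "integral {0..b} (\<lambda>s. Pp r (x - s) *\<^sub>R G s) = integral {0..b} (\<lambda>s. 0)"
    by (intro integral_cong) (auto simp: Pp_def)
  then show ?thesis using False by (simp add: Ff_def)
next
  case True
  have int: "(\<lambda>s. Pp r (x - s) *\<^sub>R G s) integrable_on {0..b}"
    by (intro integrable_continuous_real cont_PG[OF G r]) auto
  have "integral {0..x} (\<lambda>s. Pp r (x - s) *\<^sub>R G s) + integral {x..b} (\<lambda>s. Pp r (x - s) *\<^sub>R G s)
      = integral {0..b} (\<lambda>s. Pp r (x - s) *\<^sub>R G s)"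
    using True xb int by (rule Henstock_Kurzweil_Integration.integral_combine)
  moreover have "integral {x..b} (\<lambda>s. Pp r (x - s) *\<^sub>R G s) = integral {x..b} (\<lambda>s. 0)"
    using r by (intro integral_cong) (auto simp: Pp_def)
  moreover have "integral {0..x} (\<lambda>s. Pp r (x - s) *\<^sub>R G s) = integral {0..x} (\<lambda>s. ((x - s) ^ r / fact r) *\<^sub>R G s)"
    by (intro integral_cong) (auto simp: Pp_def)
  ultimately show ?thesis using True by (simp add: Ff_def)
qed

lemma Ff_deriv_Suc:
  fixes G :: "real \<Rightarrow> real^'n^'n"
  assumes G: "continuous_on {0..} G" and r: "r \<ge> 1"
  shows "(Ff G (Suc r) has_vector_derivative Ff G r x) (at x)"
proof -
  define b where "b = max x 0 + 1"
  have b0: "0 \<le> b" and xb: "x < b" unfolding b_def by auto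
  have cb: "cbox 0 b = {0..b}" by (rule cbox_interval)
  have "((\<lambda>x. integral (cbox 0 b) (\<lambda>s. Pp (Suc r) (x - s) *\<^sub>R G s)) has_vector_derivative
      integral (cbox 0 b) (\<lambda>s. Pp r (x - s) *\<^sub>R G s)) (at x within {..<b})"
  proof (rule leibniz_rule_vector_derivative)
    fix y t assume "y \<in> {..<b}" "t \<in> cbox 0 b"
    have "(Pp (Suc r) has_field_derivative Pp r (y - t)) (at (y + - t))"
      using Pp_deriv[OF r, of "y - t"] by (simp add: has_real_derivative_iff_has_vector_derivative)
    then have "((\<lambda>y. Pp (Suc r) (y + - t)) has_field_derivative Pp r (y - t)) (at y)"
      using DERIV_shift[of "Pp (Suc r)" "Pp r (y-t)" y "-t"] by simp
    then have "((\<lambda>y. Pp (Suc r) (y - t)) has_field_derivative Pp r (y - t)) (at y within {..<b})"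
      by (simp add: has_field_derivative_at_within)
    from has_vector_derivative_scaleR[OF this has_vector_derivative_const[of "G t"]]
    show "((\<lambda>y. Pp (Suc r) (y - t) *\<^sub>R G t) has_vector_derivative Pp r (y - t) *\<^sub>R G t) (at y within {..<b})"
      by simp
  next
    fix y assume "y \<in> {..<b}"
    show "(\<lambda>s. Pp (Suc r) (y - s) *\<^sub>R G s) integrable_on cbox 0 b"
      unfolding cb using r by (intro integrable_continuous_real cont_PG[OF G]) auto
  next
    have c1: "continuous_on ({..<b} \<times> cbox 0 b) (\<lambda>p. Pp r (fst p - snd p))"
      by (intro continuous_on_compose2[OF Pp_cont[OF r]] continuous_intros) auto
    have c2: "continuous_on ({..<b} \<times> cbox 0 b) (\<lambda>p. G (snd p))"
      unfolding cb by (intro continuous_on_compose2[OF G] continuous_intros) auto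
    show "continuous_on ({..<b} \<times> cbox 0 b) (\<lambda>(y, t). Pp r (y - t) *\<^sub>R G t)"
      using continuous_on_scaleR[OF c1 c2] by (simp add: case_prod_beta)
  qed (use xb in auto)
  moreover have e: "Ff G r x = integral {0..b} (\<lambda>s. Pp r (x - s) *\<^sub>R G s)"
    using G r less_imp_le[OF xb] b0 by (rule Ff_eq_big)
  moreover have "at x within {..<b} = at x" using xb by (intro at_within_open) auto
  ultimately have d: "((\<lambda>x. integral {0..b} (\<lambda>s. Pp (Suc r) (x - s) *\<^sub>R G s)) has_vector_derivative
      Ff G r x) (at x)"
    unfolding cb by metis
  have e2: "integral {0..b} (\<lambda>s. Pp (Suc r) (y - s) *\<^sub>R G s) = Ff G (Suc r) y" if "y \<in> {..<b}" for y
  proof -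
    have "Ff G (Suc r) y = integral {0..b} (\<lambda>s. Pp (Suc r) (y - s) *\<^sub>R G s)"
      using G _ _ b0 by (rule Ff_eq_big) (use that in auto)
    then show ?thesis by simp
  qed
  show ?thesis
    by (rule has_vector_derivative_transform_within_open[OF d, where S="{..<b}"])
       (use xb e2 in auto)
qed



lemma cont_G_poly:
  fixes G :: "real \<Rightarrow> real^'n^'n"
  assumes G: "continuous_on {0..} G" and S: "S \<subseteq> {0..}"
  shows "continuous_on S (\<lambda>s. ((x - s) ^ r / fact r) *\<^sub>R G s)"
proof -
  have "continuous_on S G" using G S by (rule continuous_on_subset)
  then show ?thesis by (intro continuous_intros) auto
qed

lemma Ff1_eq:
  fixes G :: "real \<Rightarrow> real^'n^'n"
  assumes G: "continuous_on {0..} G"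
  shows "Ff G 1 y = (if y \<in> {0..} then y *\<^sub>R integral {0..y} G - integral {0..y} (\<lambda>s. s *\<^sub>R G s) else 0)"
proof (cases "0 \<le> y")
  case True
  have cG: "continuous_on {0..y} G" using G by (rule continuous_on_subset) auto
  have i1: "(\<lambda>s. y *\<^sub>R G s) integrable_on {0..y}"
    using cG by (intro integrable_continuous_real continuous_intros)
  have i2: "(\<lambda>s. s *\<^sub>R G s) integrable_on {0..y}"
    using cG by (intro integrable_continuous_real continuous_intros)
  have "Ff G 1 y = integral {0..y} (\<lambda>s. y *\<^sub>R G s - s *\<^sub>R G s)"
    using True unfolding Ff_def by (auto intro!: integral_cong simp: algebra_simps)
  also have "\<dots> = integral {0..y} (\<lambda>s. y *\<^sub>R G s) - integral {0..y} (\<lambda>s. s *\<^sub>R G s)"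
    using i1 i2 by (rule Henstock_Kurzweil_Integration.integral_diff)
  finally show ?thesis using True by simp
qed (simp add: Ff_def)

lemma Ff0_eq:
  fixes G :: "real \<Rightarrow> real^'n^'n"
  shows "Ff G 0 y = (if y \<in> {0..} then integral {0..y} G else 0)"
  by (simp add: Ff_def)

lemma Ff_deriv_1:
  fixes G :: "real \<Rightarrow> real^'n^'n"
  assumes G: "continuous_on {0..} G"
  shows "(Ff G 1 has_vector_derivative Ff G 0 x) (at x)"
proof -
  have cl: "closure {0::real..} \<inter> closure {..<0} = {0}" by (auto simp: closure_closed)
  have SS: "{0::real..} \<union> (closure {0..} \<inter> closure {..<0}) = {0..}" by (auto simp: closure_closed)
  have TT: "{..<0::real} \<union> (closure {0..} \<inter> closure {..<0}) = {..0}" by (auto simp: closure_closed)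
  have Gs: "continuous_on {0..} (\<lambda>s. s *\<^sub>R G s)" using G by (intro continuous_intros)
  have "((\<lambda>y. if y \<in> {0..} then y *\<^sub>R integral {0..y} G - integral {0..y} (\<lambda>s. s *\<^sub>R G s) else 0)
     has_vector_derivative (if x \<in> {0..} then integral {0..x} G else 0)) (at x within UNIV)"
  proof (rule has_vector_derivative_If_within_closures[where T = "{..<0}"])
    show "x \<in> {0..} \<union> {..<0}" by auto
    show "UNIV = {0::real..} \<union> {..<0}" by auto
    show "((\<lambda>y. y *\<^sub>R integral {0..y} G - integral {0..y} (\<lambda>s. s *\<^sub>R G s)) has_vector_derivative integral {0..x} G)
         (at x within {0..} \<union> (closure {0..} \<inter> closure {..<0}))"
      if "x \<in> {0..} \<union> (closure {0..} \<inter> closure {..<0})"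
    proof -
      have x0: "0 \<le> x" using that SS by auto
      have d1: "((\<lambda>y. y *\<^sub>R integral {0..y} G) has_vector_derivative (x *\<^sub>R G x + 1 *\<^sub>R integral {0..x} G)) (at x within {0..})"
        by (rule has_vector_derivative_scaleR[OF DERIV_ident FTC_atLeast[OF G x0]])
      have d2: "((\<lambda>y. integral {0..y} (\<lambda>s. s *\<^sub>R G s)) has_vector_derivative x *\<^sub>R G x) (at x within {0..})"
        by (rule FTC_atLeast[OF Gs x0])
      show ?thesis unfolding SS using has_vector_derivative_diff[OF d1 d2] by simp
    qed
    show "((\<lambda>y. 0) has_vector_derivative 0) (at x within {..<0} \<union> (closure {0..} \<inter> closure {..<0}))"
      by (rule has_vector_derivative_const)
    show "y *\<^sub>R integral {0..y} G - integral {0..y} (\<lambda>s. s *\<^sub>R G s) = 0"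
      if "y \<in> closure {0..}" "y \<in> closure {..<0}" for y :: real
    proof - have "y = 0" using that by (auto simp: closure_closed) then show ?thesis by simp qed
    show "integral {0..y} G = 0" if "y \<in> closure {0..}" "y \<in> closure {..<0}" for y :: real
    proof - have "y = 0" using that by (auto simp: closure_closed) then show ?thesis by simp qed
  qed
  then show ?thesis
    unfolding Ff1_eq[OF G, abs_def] Ff0_eq by simp
qed

lemma Ff_deriv_0:
  fixes G :: "real \<Rightarrow> real^'n^'n"
  assumes G: "continuous_on {0..} G" and x0: "0 \<le> x"
  shows "(Ff G 0 has_vector_derivative G x) (at x within {0..})"
  by (rule has_vector_derivative_transform[OF _ _ FTC_atLeast[OF G x0]]) (use x0 in \<open>auto simp: Ff0_eq\<close>)

lemma Ff_neg: "x < 0 \<Longrightarrow> Ff G r x = 0"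
  by (simp add: Ff_def)

lemma Ff_comm:
  fixes G :: "real \<Rightarrow> real^'n^'n" and A :: "real^'n^'n"
  assumes G: "continuous_on {0..} G" and comm: "\<And>t. t \<ge> 0 \<Longrightarrow> A ** G t = G t ** A"
  shows "A ** Ff G r x = Ff G r x ** A"
proof (cases "0 \<le> x")
  case True
  let ?f = "\<lambda>s. ((x - s) ^ r / fact r) *\<^sub>R G s"
  have int: "?f integrable_on {0..x}"
    by (intro integrable_continuous_real cont_G_poly[OF G]) auto
  have "A ** integral {0..x} ?f = integral {0..x} ((\<lambda>M. A ** M) \<circ> ?f)"
    by (rule integral_linear[OF int bl_mm_left, symmetric])
  also have "\<dots> = integral {0..x} ((\<lambda>M. M ** A) \<circ> ?f)"
    by (intro integral_cong) (auto simp: mm_scaleR_right mm_scaleR_left comm)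
  also have "\<dots> = integral {0..x} ?f ** A"
    by (rule integral_linear[OF int bl_mm_right])
  finally show ?thesis using True by (simp add: Ff_def)
qed (simp add: Ff_def)



lemma mm_sum_left: fixes f :: "'a \<Rightarrow> real^'n^'n" shows "(\<Sum>i\<in>I. f i) ** (M::real^'n^'n) = (\<Sum>i\<in>I. f i ** M)"
  by (induct I rule: infinite_finite_induct) (simp_all add: mm_add_left)
lemma mm_sum_right: fixes f :: "'a \<Rightarrow> real^'n^'n" shows "(M::real^'n^'n) ** (\<Sum>i\<in>I. f i) = (\<Sum>i\<in>I. M ** f i)"
  by (induct I rule: infinite_finite_induct) (simp_all add: matrix_add_ldistrib)

lemma vd_mm_left:
  fixes Q :: "real^'n^'n" and f :: "real \<Rightarrow> real^'n^'n"
  assumes "(f has_vector_derivative v) F"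
  shows "((\<lambda>x. Q ** f x) has_vector_derivative Q ** v) F"
  using bounded_linear.has_derivative[OF bl_mm_left[of Q] assms[unfolded has_vector_derivative_def]]
  unfolding has_vector_derivative_def by (simp add: mm_scaleR_right)

lemma hi_cong_fin:
  assumes "(f has_integral y) T" "finite S" "\<And>x. x \<in> T - S \<Longrightarrow> g x = f x"
  shows "(g has_integral y) T"
  using assms has_integral_spike_finite_eq by blast

lemma Z_sum:
  assumes s: "\<sigma> > 0" and N: "\<lfloor>v / \<sigma>\<rfloor> + 1 \<le> int N"
  shows "Zfun A0 A1 \<sigma> v = (\<Sum>r=0..N. Pp r (v - (real r - 1) * \<sigma>) *\<^sub>R Qmat A0 A1 r)"
proof (cases "v < - \<sigma>")
  case True
  have "Pp r (v - (real r - 1) * \<sigma>) = 0" for r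
  proof -
    have "(real r - 1) * \<sigma> \<ge> - \<sigma>" using s by (simp add: algebra_simps)
    then show ?thesis using True by (simp add: Pp_def)
  qed
  then show ?thesis using True by (simp add: Zfun_def)
next
  case False
  define u where "u = nat (\<lfloor>v / \<sigma>\<rfloor> + 1)"
  have fl: "\<lfloor>v / \<sigma>\<rfloor> \<ge> -1"
    using False s by (simp add: le_floor_iff field_simps)
  have uN: "u \<le> N" using N fl unfolding u_def by linarith
  have Z: "Zfun A0 A1 \<sigma> v = (\<Sum>r=0..u. ((v - (real r - 1) * \<sigma>) ^ r / fact r) *\<^sub>R Qmat A0 A1 r)"
    using False by (simp add: Zfun_def u_def)
  have "(\<Sum>r=0..N. Pp r (v - (real r - 1) * \<sigma>) *\<^sub>R Qmat A0 A1 r)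
      = (\<Sum>r=0..u. Pp r (v - (real r - 1) * \<sigma>) *\<^sub>R Qmat A0 A1 r)"
  proof (rule sum.mono_neutral_right)
    show "\<forall>i\<in>{0..N} - {0..u}. Pp i (v - (real i - 1) * \<sigma>) *\<^sub>R Qmat A0 A1 i = 0"
    proof
      fix i assume "i \<in> {0..N} - {0..u}"
      then have "i > u" by auto
      then have "int i - 1 \<ge> \<lfloor>v / \<sigma>\<rfloor> + 1" unfolding u_def using fl by linarith
      then have "v / \<sigma> < real i - 1" by (simp add: floor_le_iff[symmetric]) linarith
      then have "v < (real i - 1) * \<sigma>" using s by (simp add: divide_less_eq)
      then show "Pp i (v - (real i - 1) * \<sigma>) *\<^sub>R Qmat A0 A1 i = 0" by (simp add: Pp_def)
    qed
  qed (use uN in auto)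
  also have "\<dots> = (\<Sum>r=0..u. ((v - (real r - 1) * \<sigma>) ^ r / fact r) *\<^sub>R Qmat A0 A1 r)"
  proof (rule sum.cong[OF refl])
    fix i assume "i \<in> {0..u}"
    then have "int i \<le> \<lfloor>v / \<sigma>\<rfloor> + 1" unfolding u_def using fl by auto
    then have "int i - 1 \<le> \<lfloor>v / \<sigma>\<rfloor>" by linarith
    then have "of_int (int i - 1) \<le> v / \<sigma>" by (simp only: le_floor_iff[symmetric])
    then have "real i - 1 \<le> v / \<sigma>" by simp
    then have "(real i - 1) * \<sigma> \<le> v" using s by (simp add: le_divide_eq)
    then show "Pp i (v - (real i - 1) * \<sigma>) *\<^sub>R Qmat A0 A1 i = ((v - (real i - 1) * \<sigma>) ^ i / fact i) *\<^sub>R Qmat A0 A1 i"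
      by (simp add: Pp_def)
  qed
  finally show ?thesis using Z by simp
qed

lemma term_int:
  fixes G :: "real \<Rightarrow> real^'n^'n" and Q :: "real^'n^'n"
  assumes G: "continuous_on {0..} G" and t: "0 \<le> t" and ct: "c \<le> t"
  shows "((\<lambda>s. Pp r (c - s) *\<^sub>R (Q ** G s)) has_integral (Q ** Ff G r c)) {0..t}"
proof (cases "c < 0")
  case True
  have "((\<lambda>s. 0) has_integral (Q ** Ff G r c)) {0..t}" using True by (simp add: Ff_def)
  then show ?thesis
    by (rule hi_cong_fin[of _ _ _ "{}"]) (use True in \<open>auto simp: Pp_def\<close>)
next
  case False
  let ?f = "\<lambda>s. ((c - s) ^ r / fact r) *\<^sub>R G s"
  have int: "?f integrable_on {0..c}"
    by (intro integrable_continuous_real cont_G_poly[OF G]) auto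
  have "((\<lambda>M. Q ** M) \<circ> ?f has_integral Q ** integral {0..c} ?f) {0..c}"
    by (rule has_integral_linear[OF integrable_integral[OF int] bl_mm_left])
  moreover have FF: "Ff G r c = integral {0..c} ?f" using False by (simp add: Ff_def)
  ultimately have i0: "((\<lambda>M. Q ** M) \<circ> ?f has_integral Q ** Ff G r c) {0..c}" by simp
  have i1: "((\<lambda>s. Pp r (c - s) *\<^sub>R (Q ** G s)) has_integral Q ** Ff G r c) {0..c}"
    by (rule hi_cong_fin[OF i0, of "{}"]) (auto simp: Pp_def mm_scaleR_right)
  have "((\<lambda>s. 0) has_integral 0) {c..t}" by simp
  then have i2: "((\<lambda>s. Pp r (c - s) *\<^sub>R (Q ** G s)) has_integral 0) {c..t}"
    by (rule hi_cong_fin[of _ _ _ "{c}"]) (auto simp: Pp_def)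
  show ?thesis using has_integral_combine[OF _ ct i1 i2] False by simp
qed

lemma X_eq:
  fixes G :: "real \<Rightarrow> real^'n^'n"
  assumes s: "\<sigma> > 0" and G: "continuous_on {0..} G" and t1: "- \<sigma> \<le> t" and tN: "t \<le> real N * \<sigma>"
  shows "Xsol A0 A1 \<sigma> G t = (\<Sum>r=0..N. Qmat A0 A1 r ** Ff G r (t - real r * \<sigma>))"
proof (cases "0 \<le> t")
  case True
  have "Xsol A0 A1 \<sigma> G t = integral {0..t} (\<lambda>s. \<Sum>r=0..N. Pp r (t - real r * \<sigma> - s) *\<^sub>R (Qmat A0 A1 r ** G s))"
  proof -
    have "Zfun A0 A1 \<sigma> (t - \<sigma> - s) ** Gstar \<sigma> G s = (\<Sum>r=0..N. Pp r (t - real r * \<sigma> - s) *\<^sub>R (Qmat A0 A1 r ** G s))"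
      if "s \<in> {0..t}" for s
    proof -
      have "\<lfloor>(t - \<sigma> - s) / \<sigma>\<rfloor> + 1 \<le> int N"
      proof -
        have "(t - \<sigma> - s) / \<sigma> < real N"
          using that tN s by (simp add: divide_less_eq)
        then have "\<lfloor>(t - \<sigma> - s) / \<sigma>\<rfloor> < int N" by (simp add: floor_less_iff)
        then show ?thesis by linarith
      qed
      note Z_sum[OF s this, of A0 A1]
      moreover have "t - \<sigma> - s - (real r - 1) * \<sigma> = t - real r * \<sigma> - s" for r
        by (simp add: algebra_simps)
      ultimately show ?thesis using that
        by (simp add: Gstar_def mm_sum_left mm_scaleR_left)
    qed
    note eq = this
    have "Xsol A0 A1 \<sigma> G t = integral {0..t} (\<lambda>s. Zfun A0 A1 \<sigma> (t - \<sigma> - s) ** Gstar \<sigma> G s)"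
      using True by (simp add: Xsol_def)
    also have "\<dots> = integral {0..t} (\<lambda>s. \<Sum>r=0..N. Pp r (t - real r * \<sigma> - s) *\<^sub>R (Qmat A0 A1 r ** G s))"
      by (rule integral_cong) (rule eq)
    finally show ?thesis .
  qed
  also have "\<dots> = (\<Sum>r=0..N. Qmat A0 A1 r ** Ff G r (t - real r * \<sigma>))"
  proof (rule integral_unique, rule has_integral_sum)
    fix r assume "r \<in> {0..N}"
    show "((\<lambda>s. Pp r (t - real r * \<sigma> - s) *\<^sub>R (Qmat A0 A1 r ** G s)) has_integral
      Qmat A0 A1 r ** Ff G r (t - real r * \<sigma>)) {0..t}"
      by (rule term_int[OF G True]) (use s in auto)
  qed simp
  finally show ?thesis .
next
  case False
  have "((\<lambda>s. 0) has_integral 0) {t..0}" by simp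
  then have "((\<lambda>s. Zfun A0 A1 \<sigma> (t - \<sigma> - s) ** Gstar \<sigma> G s) has_integral 0) {t..0}"
    by (rule hi_cong_fin[of _ _ _ "{t}"]) (auto simp: Zfun_def)
  then have "Xsol A0 A1 \<sigma> G t = 0" using False by (simp add: Xsol_def integral_unique)
  moreover have "Ff G r (t - real r * \<sigma>) = 0" for r
    using False s by (intro Ff_neg) (smt (verit) mult_nonneg_nonneg of_nat_0_le_iff)
  ultimately show ?thesis by simp
qed



lemma Ff_deriv_all:
  fixes G :: "real \<Rightarrow> real^'n^'n"
  assumes G: "continuous_on {0..} G"
  shows "(Ff G (Suc i) has_vector_derivative Ff G i x) (at x)"
proof (cases i)
  case 0 then show ?thesis using Ff_deriv_1[OF G] by simp
next
  case (Suc j) then show ?thesis using Ff_deriv_Suc[OF G, of i] by simp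
qed

theorem theorem6:
  fixes A0 A1 :: "real^'n^'n" and \<sigma> :: real and G :: "real \<Rightarrow> real^'n^'n"
  assumes "\<sigma> > 0"
    and "continuous_on {0..} G"
    and "\<And>t. t \<ge> 0 \<Longrightarrow> A1 ** G t = G t ** A1"
  shows "(\<forall>t\<ge>0. (Xsol A0 A1 \<sigma> G has_vector_derivative
              (A0 ** Xsol A0 A1 \<sigma> G (t - \<sigma>) + Xsol A0 A1 \<sigma> G (t - \<sigma>) ** A1 + G t))
              (at t within {0..}))
         \<and> (\<forall>t\<in>{-\<sigma>..0}. Xsol A0 A1 \<sigma> G t = 0)"
proof (intro conjI allI impI ballI)
  note s = assms(1) and G = assms(2) and comm = assms(3)
  fix t :: real assume "t \<in> {-\<sigma>..0}"
  then have "Xsol A0 A1 \<sigma> G t = (\<Sum>r=0..0. Qmat A0 A1 r ** Ff G r (t - real r * \<sigma>))"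
    by (intro X_eq[OF s G]) auto
  also have "\<dots> = 0" using \<open>t \<in> {-\<sigma>..0}\<close> by (cases "t = 0") (auto simp: Ff_def)
  finally show "Xsol A0 A1 \<sigma> G t = 0" .
next
  note s = assms(1) and G = assms(2) and comm = assms(3)
  fix t :: real assume t0: "0 \<le> t"
  define M where "M = nat \<lceil>t / \<sigma>\<rceil> + 1"
  have tM: "t \<le> real M * \<sigma>"
  proof -
    have "t / \<sigma> \<le> real M" unfolding M_def by linarith
    then show ?thesis using s by (simp add: divide_le_eq)
  qed
  let ?Q = "Qmat A0 A1"
  let ?S = "\<lambda>y. ?Q 0 ** Ff G 0 y + (\<Sum>i=0..M. ?Q (Suc i) ** Ff G (Suc i) (y - real (Suc i) * \<sigma>))"
  have SX: "?S y = Xsol A0 A1 \<sigma> G y" if "y \<in> {0..}" "dist y t < \<sigma>" for y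
  proof -
    have "y \<le> real (Suc M) * \<sigma>" using that tM by (auto simp: dist_real_def algebra_simps)
    then have "Xsol A0 A1 \<sigma> G y = (\<Sum>r=0..Suc M. ?Q r ** Ff G r (y - real r * \<sigma>))"
      using that s by (intro X_eq[OF s G]) auto
    also have "\<dots> = ?S y" by (subst sum.atLeast0_atMost_Suc_shift) simp
    finally show ?thesis by simp
  qed
  have dS: "(?S has_vector_derivative (G t + (\<Sum>i=0..M. ?Q (Suc i) ** Ff G i (t - real (Suc i) * \<sigma>))))
      (at t within {0..})"
  proof (rule has_vector_derivative_add)
    show "((\<lambda>y. ?Q 0 ** Ff G 0 y) has_vector_derivative G t) (at t within {0..})"
      using Ff_deriv_0[OF G t0] by simp
    show "((\<lambda>y. \<Sum>i=0..M. ?Q (Suc i) ** Ff G (Suc i) (y - real (Suc i) * \<sigma>)) has_vector_derivative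
       (\<Sum>i=0..M. ?Q (Suc i) ** Ff G i (t - real (Suc i) * \<sigma>))) (at t within {0..})"
    proof (rule has_vector_derivative_sum)
      fix i assume "i \<in> {0..M}"
      have sh: "((\<lambda>y. y - real (Suc i) * \<sigma>) has_vector_derivative 1) (at t)"
        using has_vector_derivative_diff[OF has_vector_derivative_id has_vector_derivative_const] by simp
      have "((Ff G (Suc i) \<circ> (\<lambda>y. y - real (Suc i) * \<sigma>)) has_vector_derivative (1 *\<^sub>R Ff G i (t - real (Suc i) * \<sigma>))) (at t)"
        by (rule vector_diff_chain_at[OF sh Ff_deriv_all[OF G]])
      then have "((\<lambda>y. Ff G (Suc i) (y - real (Suc i) * \<sigma>)) has_vector_derivative Ff G i (t - real (Suc i) * \<sigma>)) (at t within {0..})"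
        by (simp add: o_def has_vector_derivative_at_within)
      then show "((\<lambda>y. ?Q (Suc i) ** Ff G (Suc i) (y - real (Suc i) * \<sigma>)) has_vector_derivative
          ?Q (Suc i) ** Ff G i (t - real (Suc i) * \<sigma>)) (at t within {0..})"
        by (rule vd_mm_left)
    qed
  qed
  have Xm: "Xsol A0 A1 \<sigma> G (t - \<sigma>) = (\<Sum>i=0..M. ?Q i ** Ff G i (t - \<sigma> - real i * \<sigma>))"
    using t0 tM s by (intro X_eq[OF s G]) (auto simp: algebra_simps)
  have "A0 ** Xsol A0 A1 \<sigma> G (t - \<sigma>) + Xsol A0 A1 \<sigma> G (t - \<sigma>) ** A1
     = (\<Sum>i=0..M. ?Q (Suc i) ** Ff G i (t - real (Suc i) * \<sigma>))"
  proof -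
    have "A0 ** (?Q i ** Ff G i y) + (?Q i ** Ff G i y) ** A1 = ?Q (Suc i) ** Ff G i y" for i y
    proof -
      have "(?Q i ** Ff G i y) ** A1 = (?Q i ** A1) ** Ff G i y"
        using Ff_comm[OF G comm, of i y] by (simp add: matrix_mul_assoc[symmetric])
      then show ?thesis by (simp add: matrix_mul_assoc mm_add_left)
    qed
    note eq1 = this
    have ar: "t - real (Suc i) * \<sigma> = t - \<sigma> - real i * \<sigma>" for i
      by (simp add: algebra_simps)
    show ?thesis unfolding Xm mm_sum_left mm_sum_right sum.distrib[symmetric]
      by (intro sum.cong refl) (simp only: ar eq1)
  qed
  then have "(?S has_vector_derivative (A0 ** Xsol A0 A1 \<sigma> G (t - \<sigma>) + Xsol A0 A1 \<sigma> G (t - \<sigma>) ** A1 + G t))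
      (at t within {0..})"
    using dS by (simp add: add.commute)
  then show "(Xsol A0 A1 \<sigma> G has_vector_derivative (A0 ** Xsol A0 A1 \<sigma> G (t - \<sigma>) + Xsol A0 A1 \<sigma> G (t - \<sigma>) ** A1 + G t))
      (at t within {0..})"
    by (rule has_vector_derivative_transform_within[OF _ s]) (use t0 SX in auto)
qed


end
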